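(* Let $\kappa$ be an algebraically closed field of characteristic zero, complete for a non-trivial non-Archimedean absolute value. Let $a,b\in\kappa$ with $|a|=1$, let $L(z)=az+b$, let $f\in\mathcal{M}(\kappa)$ be a meromorphic function not identically zero, and let $m$ be a positive integer. Then for every $r>|b|$, $$\mu(r,f\circ L)=\mu(r,f),\qquad \mu\!\left(r,\frac{f\circ L}{f}\right)=1,\qquad \mu\!\left(r,\frac{\Delta_L^mf}{f}\right)\le1.$$
   Context: $\mathcal{M}(\kappa)$ is the field of meromorphic functions over $\kappa$, i.e. quotients $g/h$ of entire functions (power series converging on all of $\kappa$), $h\not\equiv0$. For entire $g=\sum a_nz^n$, $\mu(r,g)=\max_n|a_n|r^n$; $\mu(r,g/h)=\mu(r,g)/\mu(r,h)$. $\Delta_Lf=f\circ L-f$ and $\Delta_L^mf=\Delta_L(\Delta_L^{m-1}f)$. *)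

theory Defs
  imports Complex_Main "HOL-Computational_Algebra.Polynomial"
begin

definition nonarch_abs :: "('a::field \<Rightarrow> real) \<Rightarrow> bool" where
  "nonarch_abs v \<longleftrightarrow> (\<forall>x. 0 \<le> v x) \<and> (\<forall>x. v x = 0 \<longleftrightarrow> x = 0)
     \<and> (\<forall>x y. v (x * y) = v x * v y) \<and> (\<forall>x y. v (x + y) \<le> max (v x) (v y))"

definition nontrivial_abs :: "('a::field \<Rightarrow> real) \<Rightarrow> bool" where
  "nontrivial_abs v \<longleftrightarrow> (\<exists>x. v x \<noteq> 0 \<and> v x \<noteq> 1)"

definition complete_abs :: "('a::field \<Rightarrow> real) \<Rightarrow> bool" where
  "complete_abs v \<longleftrightarrow> (\<forall>X::nat \<Rightarrow> 'a.
     (\<forall>e>0. \<exists>N. \<forall>m\<ge>N. \<forall>n\<ge>N. v (X m - X n) < e) \<longrightarrow>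
     (\<exists>l. (\<lambda>n. v (X n - l)) \<longlonglongrightarrow> 0))"

definition alg_closed :: "'a::field itself \<Rightarrow> bool" where
  "alg_closed _ \<longleftrightarrow> (\<forall>p::'a poly. 0 < degree p \<longrightarrow> (\<exists>x. poly p x = 0))"

definition series_sums :: "('a::field \<Rightarrow> real) \<Rightarrow> (nat \<Rightarrow> 'a) \<Rightarrow> 'a \<Rightarrow> 'a \<Rightarrow> bool" where
  "series_sums v c z s \<longleftrightarrow> (\<lambda>N. v ((\<Sum>n<N. c n * z ^ n) - s)) \<longlonglongrightarrow> 0"

definition entire_fun :: "('a::field \<Rightarrow> real) \<Rightarrow> (nat \<Rightarrow> 'a) \<Rightarrow> ('a \<Rightarrow> 'a) \<Rightarrow> bool" where
  "entire_fun v c F \<longleftrightarrow> (\<forall>z. series_sums v c z (F z))"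

definition is_entire :: "('a::field \<Rightarrow> real) \<Rightarrow> ('a \<Rightarrow> 'a) \<Rightarrow> bool" where
  "is_entire v F \<longleftrightarrow> (\<exists>c. entire_fun v c F)"

definition ent_coeffs :: "('a::field \<Rightarrow> real) \<Rightarrow> ('a \<Rightarrow> 'a) \<Rightarrow> nat \<Rightarrow> 'a" where
  "ent_coeffs v F = (SOME c. entire_fun v c F)"

definition mu_ent :: "('a::field \<Rightarrow> real) \<Rightarrow> real \<Rightarrow> ('a \<Rightarrow> 'a) \<Rightarrow> real" where
  "mu_ent v r F = (SUP n. v (ent_coeffs v F n) * r ^ n)"

definition mero_rep :: "('a::field \<Rightarrow> real) \<Rightarrow> ('a \<Rightarrow> 'a) \<Rightarrow> ('a \<Rightarrow> 'a) \<Rightarrow> ('a \<Rightarrow> 'a) \<Rightarrow> bool" where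
  "mero_rep v f g h \<longleftrightarrow> is_entire v g \<and> is_entire v h \<and> (\<exists>z. h z \<noteq> 0)
     \<and> (\<forall>z. h z \<noteq> 0 \<longrightarrow> f z = g z / h z)"

definition is_mero :: "('a::field \<Rightarrow> real) \<Rightarrow> ('a \<Rightarrow> 'a) \<Rightarrow> bool" where
  "is_mero v f \<longleftrightarrow> (\<exists>g h. mero_rep v f g h)"

definition mero_nonzero :: "('a::field \<Rightarrow> real) \<Rightarrow> ('a \<Rightarrow> 'a) \<Rightarrow> bool" where
  "mero_nonzero v f \<longleftrightarrow> (\<exists>g h. mero_rep v f g h \<and> (\<exists>z. g z \<noteq> 0))"

definition mu :: "('a::field \<Rightarrow> real) \<Rightarrow> real \<Rightarrow> ('a \<Rightarrow> 'a) \<Rightarrow> real" where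
  "mu v r f = (let gh = (SOME gh. mero_rep v f (fst gh) (snd gh))
               in mu_ent v r (fst gh) / mu_ent v r (snd gh))"

definition diffL :: "'a::field \<Rightarrow> 'a \<Rightarrow> ('a \<Rightarrow> 'a) \<Rightarrow> ('a \<Rightarrow> 'a)" where
  "diffL a b f = (\<lambda>z. f (a * z + b) - f z)"

end

theory Submission
  imports Defs
begin

locale ultra =
  fixes v :: "'a::field \<Rightarrow> real"
  assumes na: "nonarch_abs v" and nt: "nontrivial_abs v" and cp: "complete_abs v"
begin

lemma v_nonneg[simp]: "0 \<le> v x" using na unfolding nonarch_abs_def by blast
lemma v_eq0[simp]: "v x = 0 \<longleftrightarrow> x = 0" using na unfolding nonarch_abs_def by blast
lemma v_mult: "v (x * y) = v x * v y" using na unfolding nonarch_abs_def by blast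
lemma v_add: "v (x + y) \<le> max (v x) (v y)" using na unfolding nonarch_abs_def by blast
lemma v_zero[simp]: "v 0 = 0" by simp
lemma v_pos[simp]: "0 < v x \<longleftrightarrow> x \<noteq> 0" using v_nonneg[of x] v_eq0[of x] by linarith

lemma v_one[simp]: "v 1 = 1"
proof -
  have "v 1 = v 1 * v 1" using v_mult[of 1 1] by simp
  moreover have "v 1 \<noteq> 0" by simp
  ultimately show ?thesis by (metis mult_cancel_left1)
qed

lemma v_minus[simp]: "v (- x) = v x"
proof -
  have "v (-1) * v (-1) = 1" using v_mult[of "-1" "-1"] by simp
  hence "v (-1) = 1" using v_nonneg[of "-1"]
    by (metis abs_of_nonneg real_sqrt_abs real_sqrt_one power2_eq_square)
  thus ?thesis using v_mult[of "-1" x] by simp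
qed

lemma v_diff: "v (x - y) \<le> max (v x) (v y)"
  using v_add[of x "-y"] by simp

lemma v_commute: "v (x - y) = v (y - x)"
  by (metis minus_diff_eq v_minus)

lemma v_tri: "v (x - z) \<le> max (v (x - y)) (v (y - z))"
  using v_add[of "x - y" "y - z"] by simp

lemma v_power: "v (x ^ n) = v x ^ n"
  by (induction n) (auto simp: v_mult)

lemma v_inverse: "v (inverse x) = inverse (v x)"
proof (cases "x = 0")
  case False
  hence h: "v (inverse x) * v x = 1" using v_mult[of "inverse x" x] by simp
  have "v x \<noteq> 0" using False by simp
  thus ?thesis using h by (metis inverse_unique mult.commute)
qed simp

lemma v_divide: "v (x / y) = v x / v y"
  by (simp add: divide_inverse v_mult v_inverse)

lemma v_of_nat: "v (of_nat n) \<le> 1"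
proof (induction n)
  case (Suc n) thus ?case using v_add[of 1 "of_nat n"] by (simp add: add.commute)
qed simp

lemma v_sum_le:
  assumes "finite S" "0 \<le> B" "\<And>i. i \<in> S \<Longrightarrow> v (f i) \<le> B"
  shows "v (sum f S) \<le> B"
  using assms
proof (induction S rule: finite_induct)
  case (insert x F)
  hence "v (f x) \<le> B" "v (sum f F) \<le> B" by auto
  thus ?case using v_add[of "f x" "sum f F"] insert.hyps by simp
qed simp

lemma v_sum_lt:
  assumes "finite S" "0 < B" "\<And>i. i \<in> S \<Longrightarrow> v (f i) < B"
  shows "v (sum f S) < B"
  using assms
proof (induction S rule: finite_induct)
  case (insert x F)
  hence "v (f x) < B" "v (sum f F) < B" by auto
  thus ?case using v_add[of "f x" "sum f F"] insert.hyps by simp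
qed simp

lemma v_strict:
  assumes "v y < v x" shows "v (x + y) = v x"
proof -
  have "v (x + y) \<le> v x" using v_add[of x y] assms by simp
  moreover have "v x \<le> max (v (x + y)) (v y)" using v_diff[of "x + y" y] by simp
  ultimately show ?thesis using assms by linarith
qed

lemma small_elem: "\<exists>y. 0 < v y \<and> v y < 1"
proof -
  obtain x where x: "v x \<noteq> 0" "v x \<noteq> 1" using nt unfolding nontrivial_abs_def by blast
  show ?thesis
  proof (cases "v x < 1")
    case True thus ?thesis using x by (intro exI[of _ x]) auto
  next
    case False
    hence "v x > 1" using x by simp
    thus ?thesis using x by (intro exI[of _ "inverse x"]) (auto simp: v_inverse inverse_less_1_iff)
  qed
qed

lemma big_elem: "\<exists>y. 1 < v y"
proof -
  obtain y where "0 < v y" "v y < 1" using small_elem by blast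
  thus ?thesis by (intro exI[of _ "inverse y"]) (auto simp: v_inverse one_less_inverse)
qed

lemma big_elem_ge: "\<exists>z. s \<le> v z"
proof -
  obtain y where y: "1 < v y" using big_elem by blast
  then obtain n where "s < v y ^ n" using real_arch_pow by blast
  thus ?thesis by (intro exI[of _ "y ^ n"]) (simp add: v_power)
qed

lemma small_elem_le: "e > 0 \<Longrightarrow> \<exists>z. z \<noteq> 0 \<and> v z < e"
proof -
  assume e: "e > 0"
  obtain y where y: "0 < v y" "v y < 1" using small_elem by blast
  then obtain n where "v y ^ n < e" using real_arch_pow_inv[OF e y(2)] by blast
  thus ?thesis using y by (intro exI[of _ "y ^ n"]) (simp add: v_power)
qed


definition vlim :: "(nat \<Rightarrow> 'a) \<Rightarrow> 'a \<Rightarrow> bool" where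
  "vlim X l \<longleftrightarrow> (\<forall>e>0. \<exists>N. \<forall>n\<ge>N. v (X n - l) < e)"

definition vsmall :: "(nat \<Rightarrow> 'a) \<Rightarrow> bool" where
  "vsmall t \<longleftrightarrow> (\<forall>e>0. \<exists>N. \<forall>n\<ge>N. v (t n) < e)"

lemma series_sums_iff: "series_sums v c z s \<longleftrightarrow> vlim (\<lambda>N. \<Sum>n<N. c n * z ^ n) s"
  unfolding series_sums_def vlim_def LIMSEQ_iff by simp

lemma vlim_unique: assumes "vlim X l" "vlim X l'" shows "l = l'"
proof (rule ccontr)
  assume "l \<noteq> l'"
  hence e: "v (l - l') > 0" by simp
  obtain N1 where N1: "\<forall>n\<ge>N1. v (X n - l) < v (l - l')" using assms(1) e unfolding vlim_def by blast
  obtain N2 where N2: "\<forall>n\<ge>N2. v (X n - l') < v (l - l')" using assms(2) e unfolding vlim_def by blast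
  have "v (l - l') \<le> max (v (l - X (max N1 N2))) (v (X (max N1 N2) - l'))" by (rule v_tri)
  moreover have "v (l - X (max N1 N2)) < v (l - l')" using N1 v_commute by (metis max.cobounded1)
  moreover have "v (X (max N1 N2) - l') < v (l - l')" using N2 by simp
  ultimately show False by simp
qed

lemma vlim_const: "vlim (\<lambda>n. l) l" unfolding vlim_def by simp

lemma vlim_add: assumes "vlim X l" "vlim Y m" shows "vlim (\<lambda>n. X n + Y n) (l + m)"
  unfolding vlim_def
proof (intro allI impI)
  fix e :: real assume e: "e > 0"
  obtain N1 where N1: "\<forall>n\<ge>N1. v (X n - l) < e" using assms(1) e unfolding vlim_def by blast
  obtain N2 where N2: "\<forall>n\<ge>N2. v (Y n - m) < e" using assms(2) e unfolding vlim_def by blast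
  have "v (X n + Y n - (l + m)) < e" if "n \<ge> max N1 N2" for n
  proof -
    have "v (X n + Y n - (l + m)) = v ((X n - l) + (Y n - m))" by (simp add: algebra_simps)
    also have "\<dots> \<le> max (v (X n - l)) (v (Y n - m))" by (rule v_add)
    moreover have "v (X n - l) < e" "v (Y n - m) < e" using N1 N2 that by auto
    ultimately show ?thesis by simp
  qed
  thus "\<exists>N. \<forall>n\<ge>N. v (X n + Y n - (l + m)) < e" by blast
qed

lemma vlim_cmult: assumes "vlim X l" shows "vlim (\<lambda>n. w * X n) (w * l)"
proof (cases "w = 0")
  case True thus ?thesis by (simp add: vlim_def)
next
  case False
  show ?thesis unfolding vlim_def
  proof (intro allI impI)
    fix e :: real assume e: "e > 0"
    have "e / v w > 0" using e False by simp
    then obtain N where N: "\<forall>n\<ge>N. v (X n - l) < e / v w" using assms unfolding vlim_def by blast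
    have "v (w * X n - w * l) < e" if "n \<ge> N" for n
    proof -
      have "v (w * X n - w * l) = v w * v (X n - l)" by (simp add: v_mult[symmetric] algebra_simps)
      also have "\<dots> < v w * (e / v w)" using N that False by (intro mult_strict_left_mono) auto
      finally show ?thesis using False by simp
    qed
    thus "\<exists>N. \<forall>n\<ge>N. v (w * X n - w * l) < e" by blast
  qed
qed

lemma vlim_neg: assumes "vlim X l" shows "vlim (\<lambda>n. - X n) (- l)"
  using vlim_cmult[OF assms, of "-1"] by simp

lemma vlim_diff: assumes "vlim X l" "vlim Y m" shows "vlim (\<lambda>n. X n - Y n) (l - m)"
  using vlim_add[OF assms(1) vlim_neg[OF assms(2)]] by simp

lemma vlim_mult: assumes "vlim X l" "vlim Y m" shows "vlim (\<lambda>n. X n * Y n) (l * m)"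
  unfolding vlim_def
proof (intro allI impI)
  fix e :: real assume e: "e > 0"
  define C where "C = max 1 (v m) + v l + 1"
  have l0: "0 \<le> v l" "1 \<le> max 1 (v m)" by simp_all
  have C: "C > 0" "v l \<le> C" "max 1 (v m) \<le> C" unfolding C_def using l0 by linarith+
  have eC: "e / C > 0" using e C by simp
  obtain N1 where N1: "\<forall>n\<ge>N1. v (X n - l) < e / C" using assms(1) eC unfolding vlim_def by blast
  obtain N2 where N2: "\<forall>n\<ge>N2. v (Y n - m) < min 1 (e / C)" using assms(2) eC unfolding vlim_def
    by (metis min_less_iff_conj zero_less_one)
  have "v (X n * Y n - l * m) < e" if n: "n \<ge> max N1 N2" for n
  proof -
    have Y: "v (Y n) \<le> C"
    proof -
      have "v (Y n) \<le> max (v (Y n - m)) (v m)" using v_add[of "Y n - m" m] by simp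
      moreover have "v (Y n - m) < 1" using N2 n by simp
      hence "max (v (Y n - m)) (v m) \<le> max 1 (v m)" by (simp add: max_def)
      ultimately show ?thesis using C(3) by linarith
    qed
    have a: "v ((X n - l) * Y n) < e"
    proof -
      have "v ((X n - l) * Y n) = v (X n - l) * v (Y n)" by (rule v_mult)
      also have "\<dots> \<le> (e / C) * C" using N1 n Y eC by (intro mult_mono) auto
      also have "\<dots> = e" using C by simp
      finally have "v ((X n - l) * Y n) \<le> e" .
      moreover have "v ((X n - l) * Y n) < e"
      proof (cases "v (Y n) = 0")
        case True thus ?thesis using e by (simp add: v_mult)
      next
        case False
        hence "v (X n - l) * v (Y n) < (e / C) * v (Y n)" using N1 n by (intro mult_strict_right_mono) auto
        also have "\<dots> \<le> (e / C) * C" using Y eC by (intro mult_left_mono) auto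
        finally show ?thesis using C by (simp add: v_mult)
      qed
      ultimately show ?thesis by simp
    qed
    have b: "v (l * (Y n - m)) < e"
    proof -
      have "v (l * (Y n - m)) = v l * v (Y n - m)" by (rule v_mult)
      also have "\<dots> \<le> C * v (Y n - m)" using C by (intro mult_right_mono) auto
      also have "\<dots> < C * (e / C)" using N2 n C by (intro mult_strict_left_mono) auto
      finally show ?thesis using C by simp
    qed
    have "X n * Y n - l * m = (X n - l) * Y n + l * (Y n - m)" by (simp add: algebra_simps)
    hence "v (X n * Y n - l * m) \<le> max (v ((X n - l) * Y n)) (v (l * (Y n - m)))" using v_add by metis
    thus ?thesis using a b by simp
  qed
  thus "\<exists>N. \<forall>n\<ge>N. v (X n * Y n - l * m) < e" by blast
qed

lemma vlim_bound:
  assumes "vlim X l" "\<And>n. n \<ge> N \<Longrightarrow> v (X n - y) \<le> B"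
  shows "v (l - y) \<le> B"
proof (rule ccontr)
  assume c: "\<not> v (l - y) \<le> B"
  have B: "0 \<le> B" using assms(2)[of N] v_nonneg[of "X N - y"] by linarith
  define e where "e = v (l - y) - B"
  have e: "e > 0" using c unfolding e_def by simp
  obtain N1 where N1: "\<forall>n\<ge>N1. v (X n - l) < e" using assms(1) e unfolding vlim_def by blast
  define n where "n = max N N1"
  have "v (l - y) \<le> max (v (l - X n)) (v (X n - y))" by (rule v_tri)
  moreover have "v (l - X n) < e" using N1 v_commute n_def by (metis max.cobounded2)
  moreover have "v (X n - y) \<le> B" using assms(2) n_def by simp
  ultimately show False using B c unfolding e_def by (auto simp: max_def split: if_splits)
qed

lemma vlim_complete:
  assumes "\<And>e. e > 0 \<Longrightarrow> \<exists>N. \<forall>m\<ge>N. \<forall>n\<ge>N. v (X m - X n) < e"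
  shows "\<exists>l. vlim X l"
proof -
  obtain l where "(\<lambda>n. v (X n - l)) \<longlonglongrightarrow> 0" using cp assms unfolding complete_abs_def by blast
  thus ?thesis unfolding vlim_def LIMSEQ_iff by auto
qed

lemma sum_split_nat: "(N::nat) \<le> n \<Longrightarrow> sum t {..<n} = sum t {..<N} + sum t {N..<n}"
  using sum.atLeastLessThan_concat[where m=0 and n=N and p=n and g=t] by (simp add: atLeast0LessThan)

lemma series_conv: assumes "vsmall t" shows "\<exists>s. vlim (\<lambda>N. \<Sum>n<N. t n) s"
proof (rule vlim_complete)
  fix e :: real assume e: "e > 0"
  obtain N where N: "\<forall>n\<ge>N. v (t n) < e" using assms e unfolding vsmall_def by blast
  have "v ((\<Sum>n<p. t n) - (\<Sum>n<q. t n)) < e" if "p \<ge> N" "q \<ge> N" "q \<le> p" for p q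
  proof -
    have "(\<Sum>n<p. t n) - (\<Sum>n<q. t n) = sum t {q..<p}" using sum_split_nat[OF that(3), of t] by simp
    moreover have "v (sum t {q..<p}) < e" using N that e by (intro v_sum_lt) auto
    ultimately show ?thesis by simp
  qed
  hence "v ((\<Sum>n<p. t n) - (\<Sum>n<q. t n)) < e" if "p \<ge> N" "q \<ge> N" for p q
    using that v_commute by (metis nle_le)
  thus "\<exists>N. \<forall>m\<ge>N. \<forall>n\<ge>N. v ((\<Sum>n<m. t n) - (\<Sum>n<n. t n)) < e" by blast
qed

lemma tail_bound:
  assumes "vlim (\<lambda>N. \<Sum>n<N. t n) s" "0 \<le> B" "\<And>n. n \<ge> N \<Longrightarrow> v (t n) \<le> B"
  shows "v (s - (\<Sum>n<N. t n)) \<le> B"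
proof (rule vlim_bound[OF assms(1), of N])
  fix n assume n: "N \<le> n"
  have "(\<Sum>n<n. t n) - (\<Sum>n<N. t n) = sum t {N..<n}" using sum_split_nat[OF n, of t] by simp
  moreover have "v (sum t {N..<n}) \<le> B" using assms by (intro v_sum_le) auto
  ultimately show "v ((\<Sum>n<n. t n) - (\<Sum>n<N. t n)) \<le> B" by simp
qed

lemma terms_small: assumes "vlim (\<lambda>N. \<Sum>n<N. t n) s" shows "vsmall t"
  unfolding vsmall_def
proof (intro allI impI)
  fix e :: real assume e: "e > 0"
  obtain N where N: "\<forall>n\<ge>N. v ((\<Sum>n<n. t n) - s) < e" using assms e unfolding vlim_def by blast
  have "v (t n) < e" if "n \<ge> N" for n
  proof -
    have a: "v ((\<Sum>k<Suc n. t k) - s) < e" using N that le_SucI by blast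
    have b: "v ((\<Sum>k<n. t k) - s) < e" using N that by blast
    have "t n = ((\<Sum>k<Suc n. t k) - s) - ((\<Sum>k<n. t k) - s)" by simp
    hence "v (t n) \<le> max (v ((\<Sum>k<Suc n. t k) - s)) (v ((\<Sum>k<n. t k) - s))" using v_diff by metis
    thus ?thesis using a b by (metis max_less_iff_conj order_le_less_trans)
  qed
  thus "\<exists>N. \<forall>n\<ge>N. v (t n) < e" by blast
qed



definition Mr :: "real \<Rightarrow> (nat \<Rightarrow> 'a) \<Rightarrow> real" where
  "Mr r c = (SUP n. v (c n) * r ^ n)"

lemma entire_small:
  assumes "entire_fun v c F" "0 \<le> s"
  shows "\<forall>e>0. \<exists>N. \<forall>n\<ge>N. v (c n) * s ^ n < e"
proof (intro allI impI)
  fix e :: real assume e: "e > 0"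
  obtain z where z: "s \<le> v z" using big_elem_ge by blast
  have "vlim (\<lambda>N. \<Sum>n<N. c n * z ^ n) (F z)" using assms(1) unfolding entire_fun_def series_sums_iff by blast
  hence "vsmall (\<lambda>n. c n * z ^ n)" by (rule terms_small)
  then obtain N where N: "\<forall>n\<ge>N. v (c n * z ^ n) < e" using e unfolding vsmall_def by blast
  have "v (c n) * s ^ n < e" if "n \<ge> N" for n
  proof -
    have "v (c n) * s ^ n \<le> v (c n) * v z ^ n" using z assms(2) by (intro mult_left_mono power_mono) auto
    also have "\<dots> = v (c n * z ^ n)" by (simp add: v_mult v_power)
    finally have "v (c n) * s ^ n \<le> v (c n * z ^ n)" .
    moreover have "v (c n * z ^ n) < e" using N that by blast
    ultimately show ?thesis by linarith
  qed
  thus "\<exists>N. \<forall>n\<ge>N. v (c n) * s ^ n < e" by blast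
qed

lemma entire_bound:
  assumes "entire_fun v c F" "0 \<le> s"
  shows "\<exists>B\<ge>0. \<forall>n. v (c n) * s ^ n \<le> B"
proof -
  obtain N where N: "\<forall>n\<ge>N. v (c n) * s ^ n < 1" using entire_small[OF assms] by (meson zero_less_one)
  define B where "B = 1 + (\<Sum>n<N. v (c n) * s ^ n)"
  have nn: "\<And>n. 0 \<le> v (c n) * s ^ n" using assms(2) by simp
  have "v (c n) * s ^ n \<le> B" for n
  proof (cases "n < N")
    case True
    hence "v (c n) * s ^ n \<le> (\<Sum>n<N. v (c n) * s ^ n)"
      using nn by (intro member_le_sum) auto
    thus ?thesis unfolding B_def by simp
  next
    case False
    hence "v (c n) * s ^ n < 1" using N by simp
    moreover have "0 \<le> (\<Sum>n<N. v (c n) * s ^ n)" using nn by (intro sum_nonneg) auto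
    ultimately show ?thesis unfolding B_def by simp
  qed
  moreover have "0 \<le> B" unfolding B_def using nn by (simp add: sum_nonneg add_nonneg_nonneg)
  ultimately show ?thesis by blast
qed

lemma entire_bdd:
  assumes "entire_fun v c F" "0 \<le> s"
  shows "bdd_above (range (\<lambda>n. v (c n) * s ^ n))"
  using entire_bound[OF assms] by (auto intro: bdd_aboveI2)

lemma M_upper: assumes "entire_fun v c F" "0 \<le> r" shows "v (c n) * r ^ n \<le> Mr r c"
  unfolding Mr_def by (rule cSUP_upper[OF _ entire_bdd[OF assms]]) simp

lemma M_least: assumes "\<And>n. v (c n) * r ^ n \<le> B" shows "Mr r c \<le> B"
  unfolding Mr_def by (rule cSUP_least) (use assms in auto)

lemma M_nonneg: assumes "entire_fun v c F" "0 \<le> r" shows "0 \<le> Mr r c"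
proof -
  have "v (c 0) \<le> Mr r c" using M_upper[OF assms, of 0] by simp
  moreover have "0 \<le> v (c 0)" by simp
  ultimately show ?thesis by linarith
qed

lemma M_pos: assumes "entire_fun v c F" "0 < r" "c n \<noteq> 0" shows "0 < Mr r c"
proof -
  have "0 < v (c n) * r ^ n" using assms by simp
  also have "\<dots> \<le> Mr r c" using M_upper assms by simp
  finally show ?thesis .
qed

lemma M_zero: assumes "entire_fun v c F" "0 < r" "Mr r c = 0" shows "c n = 0"
  using M_pos[OF assms(1,2), of n] assms(3) by auto

lemma M_attained:
  assumes "entire_fun v c F" "0 < r" "c n1 \<noteq> 0"
  shows "\<exists>i0. v (c i0) * r ^ i0 = Mr r c \<and> (\<forall>i<i0. v (c i) * r ^ i < Mr r c)"
proof -
  define t where "t n = v (c n) * r ^ n" for n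
  have p: "t n1 > 0" unfolding t_def using assms by simp
  obtain N0 where N0: "\<forall>n\<ge>N0. t n < t n1" using entire_small[OF assms(1)] assms(2) p unfolding t_def
    by (meson less_imp_le)
  define N where "N = max N0 (Suc n1)"
  have N: "\<forall>n\<ge>N. t n < t n1" "n1 < N" using N0 unfolding N_def by auto
  define m0 where "m0 = Max (t ` {..<N})"
  have fin: "finite (t ` {..<N})" "t ` {..<N} \<noteq> {}" using N by auto
  have le: "t n \<le> m0" for n
  proof (cases "n < N")
    case True thus ?thesis unfolding m0_def using fin by (intro Max_ge) auto
  next
    case False
    hence "t n < t n1" using N by simp
    also have "t n1 \<le> m0" unfolding m0_def using fin N by (intro Max_ge) auto
    finally show ?thesis by simp
  qed
  have "m0 \<in> t ` {..<N}" unfolding m0_def using fin by (rule Max_in)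
  then obtain j where j: "t j = m0" by blast
  have Mle: "Mr r c \<le> m0" using le unfolding t_def by (intro M_least) auto
  have "m0 \<le> Mr r c" using M_upper[OF assms(1), of r j] assms(2) j unfolding t_def by simp
  hence Meq: "Mr r c = m0" using Mle by simp
  define i0 where "i0 = (LEAST i. t i = Mr r c)"
  have i0: "t i0 = Mr r c" unfolding i0_def using j Meq by (intro LeastI) simp
  have "t i < Mr r c" if "i < i0" for i
  proof -
    have "t i \<noteq> Mr r c" using not_less_Least[OF that[unfolded i0_def]] by simp
    moreover have "t i \<le> Mr r c" using le Meq by simp
    ultimately show ?thesis by simp
  qed
  thus ?thesis using i0 unfolding t_def by blast
qed

lemma entire_zero: "entire_fun v (\<lambda>n. 0) (\<lambda>z. 0)"
  unfolding entire_fun_def series_sums_iff by (simp add: vlim_const)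

lemma entire_add:
  assumes "entire_fun v c F" "entire_fun v d G"
  shows "entire_fun v (\<lambda>n. c n + d n) (\<lambda>z. F z + G z)"
  using assms unfolding entire_fun_def series_sums_iff
  by (auto simp: distrib_right sum.distrib intro!: vlim_add)

lemma entire_diff:
  assumes "entire_fun v c F" "entire_fun v d G"
  shows "entire_fun v (\<lambda>n. c n - d n) (\<lambda>z. F z - G z)"
  using assms unfolding entire_fun_def series_sums_iff
  by (auto simp: left_diff_distrib sum_subtractf intro!: vlim_diff)

lemma entire_cmult:
  assumes "entire_fun v c F"
  shows "entire_fun v (\<lambda>n. w * c n) (\<lambda>z. w * F z)"
  unfolding entire_fun_def series_sums_iff
proof
  fix z
  have "vlim (\<lambda>N. \<Sum>n<N. c n * z ^ n) (F z)" using assms unfolding entire_fun_def series_sums_iff by blast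
  hence "vlim (\<lambda>N. w * (\<Sum>n<N. c n * z ^ n)) (w * F z)" by (rule vlim_cmult)
  thus "vlim (\<lambda>N. \<Sum>n<N. w * c n * z ^ n) (w * F z)" by (simp add: sum_distrib_left mult.assoc)
qed

lemma coeff_zero:
  assumes "entire_fun v c (\<lambda>z. 0)"
  shows "c n = 0"
proof (rule ccontr)
  assume "c n \<noteq> 0"
  define n0 where "n0 = (LEAST n. c n \<noteq> 0)"
  have cn0: "c n0 \<noteq> 0" unfolding n0_def using \<open>c n \<noteq> 0\<close> by (rule LeastI)
  have below: "c i = 0" if "i < n0" for i using not_less_Least[OF that[unfolded n0_def]] by simp
  obtain B where B: "B \<ge> 0" "\<And>n. v (c n) \<le> B" using entire_bound[OF assms, of 1] by auto
  have key: "v (c n0) \<le> B * v z" if z: "z \<noteq> 0" "v z < 1" for z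
  proof -
    have lim: "vlim (\<lambda>N. \<Sum>n<N. c n * z ^ n) 0" using assms unfolding entire_fun_def series_sums_iff by blast
    have "v (0 - c n0 * z ^ n0) \<le> B * v z ^ Suc n0"
    proof (rule vlim_bound[OF lim, of "Suc n0"])
      fix N assume N: "Suc n0 \<le> N"
      have s1: "(\<Sum>n<N. c n * z ^ n) = (\<Sum>n<Suc n0. c n * z ^ n) + (\<Sum>n\<in>{Suc n0..<N}. c n * z ^ n)"
        by (rule sum_split_nat[OF N])
      have s2: "(\<Sum>n<Suc n0. c n * z ^ n) = c n0 * z ^ n0"
        using below by (simp add: sum.neutral)
      have "v (\<Sum>n\<in>{Suc n0..<N}. c n * z ^ n) \<le> B * v z ^ Suc n0"
      proof (rule v_sum_le)
        fix n assume n: "n \<in> {Suc n0..<N}"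
        have "v (c n * z ^ n) = v (c n) * v z ^ n" by (simp add: v_mult v_power)
        also have "\<dots> \<le> B * v z ^ Suc n0"
          using B z n by (intro mult_mono power_decreasing) auto
        finally show "v (c n * z ^ n) \<le> B * v z ^ Suc n0" .
      qed (use B in auto)
      thus "v ((\<Sum>n<N. c n * z ^ n) - c n0 * z ^ n0) \<le> B * v z ^ Suc n0" using s1 s2 by simp
    qed
    hence "v (c n0) * v z ^ n0 \<le> (B * v z) * v z ^ n0" by (simp add: v_mult v_power mult_ac)
    moreover have "v z ^ n0 > 0" using z by simp
    ultimately show ?thesis by simp
  qed
  have "v (c n0) \<le> 0"
  proof (rule field_le_epsilon)
    fix e :: real assume e: "0 < e"
    have "min 1 (e / (B + 1)) > 0" using e B by simp
    then obtain z where z: "z \<noteq> 0" "v z < min 1 (e / (B + 1))" using small_elem_le by blast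
    have "v (c n0) \<le> B * v z" using key z by simp
    also have "\<dots> \<le> (B + 1) * (e / (B + 1))" using z B by (intro mult_mono) auto
    also have "\<dots> = e" using B by simp
    finally show "v (c n0) \<le> 0 + e" by simp
  qed
  thus False using cn0 v_pos[of "c n0"] by linarith
qed

lemma coeff_unique:
  assumes "entire_fun v c F" "entire_fun v d F"
  shows "c = d"
proof
  fix n
  have "entire_fun v (\<lambda>n. c n - d n) (\<lambda>z. 0)" using entire_diff[OF assms] by simp
  thus "c n = d n" using coeff_zero by fastforce
qed

lemma ent_coeffs_eq: assumes "entire_fun v c F" shows "ent_coeffs v F = c"
  unfolding ent_coeffs_def
proof (rule some_equality)
  show "entire_fun v c F" by (rule assms)
  fix d assume "entire_fun v d F" thus "d = c" using coeff_unique assms by blast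
qed

lemma mu_ent_eq: assumes "entire_fun v c F" shows "mu_ent v r F = Mr r c"
  unfolding mu_ent_def ent_coeffs_eq[OF assms] Mr_def by simp

lemma fun_nonzero_coeff:
  assumes "entire_fun v c F" "F z \<noteq> 0" shows "\<exists>n. c n \<noteq> 0"
proof (rule ccontr)
  assume "\<not> ?thesis"
  hence "vlim (\<lambda>N. \<Sum>n<N. c n * z ^ n) 0" by (simp add: vlim_const)
  moreover have "vlim (\<lambda>N. \<Sum>n<N. c n * z ^ n) (F z)" using assms unfolding entire_fun_def series_sums_iff by blast
  ultimately show False using vlim_unique assms(2) by metis
qed

lemma coeff_nonzero_fun:
  assumes "entire_fun v c F" "c n \<noteq> 0" shows "\<exists>z. F z \<noteq> 0"
proof (rule ccontr)
  assume "\<not> ?thesis"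
  hence "F = (\<lambda>z. 0)" by auto
  thus False using coeff_zero assms by metis
qed



definition cprod :: "(nat \<Rightarrow> 'a) \<Rightarrow> (nat \<Rightarrow> 'a) \<Rightarrow> nat \<Rightarrow> 'a" where
  "cprod c d n = (\<Sum>i\<le>n. c i * d (n - i))"

lemma vlim_close:
  assumes "vlim X l" "\<And>e. e > 0 \<Longrightarrow> \<exists>N. \<forall>n\<ge>N. v (Y n - X n) < e"
  shows "vlim Y l"
  unfolding vlim_def
proof (intro allI impI)
  fix e :: real assume e: "e > 0"
  obtain N1 where N1: "\<forall>n\<ge>N1. v (X n - l) < e" using assms(1) e unfolding vlim_def by blast
  obtain N2 where N2: "\<forall>n\<ge>N2. v (Y n - X n) < e" using assms(2) e by blast
  have "v (Y n - l) < e" if "n \<ge> max N1 N2" for n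
  proof -
    have "v (Y n - l) \<le> max (v (Y n - X n)) (v (X n - l))" by (rule v_tri)
    moreover have "v (Y n - X n) < e" "v (X n - l) < e" using N1 N2 that by auto
    ultimately show ?thesis by simp
  qed
  thus "\<exists>N. \<forall>n\<ge>N. v (Y n - l) < e" by blast
qed

lemma entire_mult:
  assumes c: "entire_fun v c F" and d: "entire_fun v d G"
  shows "entire_fun v (cprod c d) (\<lambda>z. F z * G z)"
  unfolding entire_fun_def series_sums_iff
proof
  fix z
  define a where "a i = c i * z ^ i" for i
  define b where "b j = d j * z ^ j" for j
  have la: "vlim (\<lambda>N. \<Sum>i<N. a i) (F z)" using c unfolding entire_fun_def series_sums_iff a_def by blast
  have lb: "vlim (\<lambda>N. \<Sum>i<N. b i) (G z)" using d unfolding entire_fun_def series_sums_iff b_def by blast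
  have lab: "vlim (\<lambda>N. (\<Sum>i<N. a i) * (\<Sum>i<N. b i)) (F z * G z)" by (rule vlim_mult[OF la lb])
  have sa: "vsmall a" using terms_small[OF la] .
  have sb: "vsmall b" using terms_small[OF lb] .
  obtain Ca where Ca: "Ca \<ge> 0" "\<And>i. v (c i) * v z ^ i \<le> Ca" using entire_bound[OF c, of "v z"] by auto
  obtain Cb where Cb: "Cb \<ge> 0" "\<And>i. v (d i) * v z ^ i \<le> Cb" using entire_bound[OF d, of "v z"] by auto
  have va: "v (a i) \<le> Ca" for i using Ca unfolding a_def by (simp add: v_mult v_power)
  have vb: "v (b i) \<le> Cb" for i using Cb unfolding b_def by (simp add: v_mult v_power)
  have P: "(\<Sum>n<N. cprod c d n * z ^ n) = (\<Sum>(i,j)\<in>{(i,j). i+j < N}. a i * b j)" for N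
  proof -
    have "(\<Sum>n<N. cprod c d n * z ^ n) = (\<Sum>n<N. \<Sum>i\<le>n. a i * b (n - i))"
    proof (rule sum.cong[OF refl])
      fix n assume "n \<in> {..<N}"
      have "cprod c d n * z ^ n = (\<Sum>i\<le>n. c i * d (n - i) * z ^ n)" unfolding cprod_def by (simp add: sum_distrib_right)
      also have "\<dots> = (\<Sum>i\<le>n. a i * b (n - i))"
      proof (rule sum.cong[OF refl])
        fix i assume "i \<in> {..n}"
        hence "z ^ n = z ^ i * z ^ (n - i)" by (simp add: power_add[symmetric])
        thus "c i * d (n - i) * z ^ n = a i * b (n - i)" unfolding a_def b_def by (simp add: mult_ac)
      qed
      finally show "cprod c d n * z ^ n = (\<Sum>i\<le>n. a i * b (n - i))" .
    qed
    also have "\<dots> = (\<Sum>(i,j)\<in>{(i,j). i+j < N}. a i * b j)" by (rule sum.triangle_reindex[symmetric])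
    finally show ?thesis .
  qed
  have ST: "(\<Sum>i<N. a i) * (\<Sum>i<N. b i) = (\<Sum>(i,j)\<in>{..<N} \<times> {..<N}. a i * b j)" for N
    by (simp add: sum_product sum.cartesian_product)
  have sub: "{(i,j). i+j < N} \<subseteq> {..<N} \<times> {..<N}" for N :: nat by auto
  have fin: "finite ({..<N} \<times> {..<(N::nat)})" for N by simp
  have diff: "(\<Sum>(i,j)\<in>{(i,j). i+j < N}. a i * b j) - (\<Sum>i<N. a i) * (\<Sum>i<N. b i)
      = - (\<Sum>(i,j)\<in>({..<N} \<times> {..<N}) - {(i,j). i+j < N}. a i * b j)" for N
    unfolding ST using sum_diff[OF fin sub, of "\<lambda>(i,j). a i * b j"] by simp
  show "vlim (\<lambda>N. \<Sum>n<N. cprod c d n * z ^ n) (F z * G z)"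
  proof (rule vlim_close[OF lab])
    fix e :: real assume e: "e > 0"
    define C where "C = max Ca Cb + 1"
    have C: "C > 0" "Ca \<le> C" "Cb \<le> C" unfolding C_def using Ca Cb by auto
    have e2: "e / 2 / C > 0" using e C by simp
    obtain N1 where N1: "\<forall>n\<ge>N1. v (a n) < e / 2 / C" using sa e2 unfolding vsmall_def by blast
    obtain N2 where N2: "\<forall>n\<ge>N2. v (b n) < e / 2 / C" using sb e2 unfolding vsmall_def by blast
    have "v ((\<Sum>n<N. cprod c d n * z ^ n) - (\<Sum>i<N. a i) * (\<Sum>i<N. b i)) < e" if N: "N \<ge> 2 * max N1 N2" for N
    proof -
      have "v (\<Sum>(i,j)\<in>({..<N} \<times> {..<N}) - {(i,j). i+j < N}. a i * b j) \<le> e / 2"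
      proof (rule v_sum_le)
        fix p assume p: "p \<in> ({..<N} \<times> {..<N}) - {(i,j). i+j < N}"
        obtain i j where ij: "p = (i, j)" by (cases p)
        have ij2: "i + j \<ge> N" using p ij by auto
        have "v (a i * b j) \<le> e / 2"
        proof (cases "i \<ge> N1")
          case True
          have "v (a i * b j) = v (a i) * v (b j)" by (rule v_mult)
          also have "\<dots> \<le> (e / 2 / C) * C" using N1 True vb[of j] C e2 by (intro mult_mono) (auto intro: less_imp_le)
          finally show ?thesis using C by simp
        next
          case False
          hence "j \<ge> N2" using ij2 N by auto
          have "v (a i * b j) = v (b j) * v (a i)" by (simp add: v_mult)
          also have "\<dots> \<le> (e / 2 / C) * C" using N2 \<open>j \<ge> N2\<close> va[of i] C e2 by (intro mult_mono) (auto intro: less_imp_le)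
          finally show ?thesis using C by simp
        qed
        thus "v (case p of (i, j) \<Rightarrow> a i * b j) \<le> e / 2" using ij by simp
      qed (use e in auto)
      hence "v ((\<Sum>(i,j)\<in>{(i,j). i+j < N}. a i * b j) - (\<Sum>i<N. a i) * (\<Sum>i<N. b i)) \<le> e / 2"
        unfolding diff by simp
      thus ?thesis unfolding P using e by simp
    qed
    thus "\<exists>N. \<forall>n\<ge>N. v ((\<Sum>n<n. cprod c d n * z ^ n) - (\<Sum>i<n. a i) * (\<Sum>i<n. b i)) < e" by blast
  qed
qed

lemma Mr_zero: "Mr r (\<lambda>n. 0) = 0"
  unfolding Mr_def by simp

lemma M_mult:
  assumes c: "entire_fun v c F" and d: "entire_fun v d G" and r: "0 < r"
  shows "Mr r (cprod c d) = Mr r c * Mr r d"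
proof (cases "(\<exists>n. c n \<noteq> 0) \<and> (\<exists>n. d n \<noteq> 0)")
  case False
  hence "c = (\<lambda>n. 0) \<or> d = (\<lambda>n. 0)" by auto
  hence "cprod c d = (\<lambda>n. 0)" "Mr r c = 0 \<or> Mr r d = 0" unfolding cprod_def by (auto simp: Mr_zero)
  thus ?thesis by (auto simp: Mr_zero)
next
  case True
  then obtain n1 n2 where n12: "c n1 \<noteq> 0" "d n2 \<noteq> 0" by blast
  obtain i0 where i0: "v (c i0) * r ^ i0 = Mr r c" "\<forall>i<i0. v (c i) * r ^ i < Mr r c"
    using M_attained[OF c r n12(1)] by blast
  obtain j0 where j0: "v (d j0) * r ^ j0 = Mr r d" "\<forall>i<j0. v (d i) * r ^ i < Mr r d"
    using M_attained[OF d r n12(2)] by blast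
  have Mc: "Mr r c > 0" using M_pos[OF c r n12(1)] .
  have Md: "Mr r d > 0" using M_pos[OF d r n12(2)] .
  have e: "entire_fun v (cprod c d) (\<lambda>z. F z * G z)" by (rule entire_mult[OF c d])
  have tm: "v (c i * d (n - i)) * r ^ n = (v (c i) * r ^ i) * (v (d (n - i)) * r ^ (n - i))" if "i \<le> n" for i n
  proof -
    have "r ^ n = r ^ i * r ^ (n - i)" using that by (simp add: power_add[symmetric])
    thus ?thesis by (simp add: v_mult mult_ac)
  qed
  have up: "v (cprod c d n) * r ^ n \<le> Mr r c * Mr r d" for n
  proof -
    have rn: "r ^ n > 0" using r by simp
    have "v (cprod c d n) \<le> Mr r c * Mr r d / r ^ n"
      unfolding cprod_def
    proof (rule v_sum_le)
      fix i assume "i \<in> {..n}"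
      hence i: "i \<le> n" by simp
      have "v (c i * d (n - i)) * r ^ n \<le> Mr r c * Mr r d"
        unfolding tm[OF i] using M_upper[OF c, of r i] M_upper[OF d, of r "n - i"] r Mc
        by (intro mult_mono) auto
      thus "v (c i * d (n - i)) \<le> Mr r c * Mr r d / r ^ n" using rn by (simp add: pos_le_divide_eq)
    qed (use Mc Md rn in auto)
    thus ?thesis using rn by (simp add: pos_le_divide_eq)
  qed
  define n where "n = i0 + j0"
  have low: "v (cprod c d n) * r ^ n = Mr r c * Mr r d"
  proof -
    have rn: "r ^ n > 0" using r by simp
    have fin: "finite {..n}" "i0 \<in> {..n}" unfolding n_def by auto
    have split: "cprod c d n = c i0 * d j0 + (\<Sum>i\<in>{..n} - {i0}. c i * d (n - i))"
      unfolding cprod_def using sum.remove[OF fin, of "\<lambda>i. c i * d (n - i)"] by (simp add: n_def)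
    have main: "v (c i0 * d j0) * r ^ n = Mr r c * Mr r d"
      using tm[of i0 n] i0(1) j0(1) unfolding n_def by simp
    have others: "v (\<Sum>i\<in>{..n} - {i0}. c i * d (n - i)) < v (c i0 * d j0)"
    proof (rule v_sum_lt)
      show "0 < v (c i0 * d j0)" using main Mc Md rn by (metis mult_pos_pos zero_less_mult_pos2)
      fix i assume i: "i \<in> {..n} - {i0}"
      hence il: "i \<le> n" "i \<noteq> i0" by auto
      have A: "0 \<le> v (c i) * r ^ i" "0 \<le> v (d (n - i)) * r ^ (n - i)" using r by auto
      have "(v (c i) * r ^ i) * (v (d (n - i)) * r ^ (n - i)) < Mr r c * Mr r d"
      proof (cases "i < i0")
        case True
        have "(v (c i) * r ^ i) * (v (d (n - i)) * r ^ (n - i)) \<le> (v (c i) * r ^ i) * Mr r d"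
          using M_upper[OF d, of r "n - i"] r A by (intro mult_left_mono) auto
        also have "\<dots> < Mr r c * Mr r d" using i0(2) True Md by (intro mult_strict_right_mono) auto
        finally show ?thesis .
      next
        case False
        hence "n - i < j0" using il unfolding n_def by auto
        have "(v (c i) * r ^ i) * (v (d (n - i)) * r ^ (n - i)) \<le> Mr r c * (v (d (n - i)) * r ^ (n - i))"
          using M_upper[OF c, of r i] r A by (intro mult_right_mono) auto
        also have "\<dots> < Mr r c * Mr r d" using j0(2) \<open>n - i < j0\<close> Mc by (intro mult_strict_left_mono) auto
        finally show ?thesis .
      qed
      hence "v (c i * d (n - i)) * r ^ n < v (c i0 * d j0) * r ^ n" unfolding tm[OF il(1)] main .
      thus "v (c i * d (n - i)) < v (c i0 * d j0)" using rn by simp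
    qed (simp)
    have "v (cprod c d n) = v (c i0 * d j0)" unfolding split by (rule v_strict[OF others])
    thus ?thesis using main by simp
  qed
  have "Mr r (cprod c d) \<le> Mr r c * Mr r d" using up by (intro M_least) auto
  moreover have "Mr r c * Mr r d \<le> Mr r (cprod c d)" using M_upper[OF e, of r n] r low by simp
  ultimately show ?thesis by simp
qed

lemma M_add_le:
  assumes c: "entire_fun v c F" and d: "entire_fun v d G" and r: "0 \<le> r"
  shows "Mr r (\<lambda>n. c n + d n) \<le> max (Mr r c) (Mr r d)"
proof (rule M_least)
  fix n
  have "v (c n + d n) * r ^ n \<le> max (v (c n)) (v (d n)) * r ^ n" using v_add r by (intro mult_right_mono) auto
  also have "\<dots> = max (v (c n) * r ^ n) (v (d n) * r ^ n)" using r by (simp add: max_mult_distrib_right)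
  also have "\<dots> \<le> max (Mr r c) (Mr r d)" using M_upper[OF c r, of n] M_upper[OF d r, of n] by auto
  finally show "v (c n + d n) * r ^ n \<le> max (Mr r c) (Mr r d)" .
qed

lemma M_cmult_le:
  assumes c: "entire_fun v c F" and r: "0 \<le> r"
  shows "Mr r (\<lambda>n. w * c n) \<le> v w * Mr r c"
proof (rule M_least)
  fix n
  have "v (w * c n) * r ^ n = v w * (v (c n) * r ^ n)" by (simp add: v_mult mult_ac)
  also have "\<dots> \<le> v w * Mr r c" using M_upper[OF c r, of n] by (intro mult_left_mono) auto
  finally show "v (w * c n) * r ^ n \<le> v w * Mr r c" .
qed



lemma entire_scale:
  assumes "entire_fun v c F"
  shows "entire_fun v (\<lambda>n. c n * \<alpha> ^ n) (\<lambda>z. F (\<alpha> * z))"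
  unfolding entire_fun_def series_sums_iff
proof
  fix z
  have "vlim (\<lambda>N. \<Sum>n<N. c n * (\<alpha> * z) ^ n) (F (\<alpha> * z))"
    using assms unfolding entire_fun_def series_sums_iff by blast
  thus "vlim (\<lambda>N. \<Sum>n<N. c n * \<alpha> ^ n * z ^ n) (F (\<alpha> * z))" by (simp add: power_mult_distrib mult_ac)
qed

lemma entire_trans:
  assumes c: "entire_fun v c F" and r: "0 < r" and beta: "v \<beta> \<le> r"
  shows "\<exists>e. entire_fun v e (\<lambda>z. F (z + \<beta>)) \<and> (\<forall>k. v (e k) * r ^ k \<le> Mr r c)"
proof -
  define t where "t k j = c (j + k) * of_nat ((j + k) choose k) * \<beta> ^ j" for k j
  define R0 where "R0 = max 1 (v \<beta>)"
  have R0: "1 \<le> R0" "v \<beta> \<le> R0" unfolding R0_def by auto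
  have vt: "v (t k j) \<le> v (c (j + k)) * R0 ^ (j + k)" for k j
  proof -
    have "v (t k j) = v (c (j + k)) * v (of_nat ((j + k) choose k) :: 'a) * v \<beta> ^ j"
      unfolding t_def by (simp add: v_mult v_power)
    also have "\<dots> \<le> v (c (j + k)) * 1 * R0 ^ (j + k)"
    proof (intro mult_mono)
      show "v \<beta> ^ j \<le> R0 ^ (j + k)"
        using power_mono[OF R0(2), of j] power_increasing[OF _ R0(1), of j "j + k"] by simp
    qed (use v_of_nat in auto)
    finally show ?thesis by simp
  qed
  have small: "vsmall (t k)" for k
    unfolding vsmall_def
  proof (intro allI impI)
    fix e :: real assume e: "e > 0"
    obtain N where N: "\<forall>n\<ge>N. v (c n) * R0 ^ n < e" using entire_small[OF c, of R0] R0 e by auto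
    have "v (t k j) < e" if "j \<ge> N" for j using vt[of k j] N that by (meson le_add1 order_trans order_le_less_trans)
    thus "\<exists>N. \<forall>n\<ge>N. v (t k n) < e" by blast
  qed
  define e where "e k = (SOME s. vlim (\<lambda>J. \<Sum>j<J. t k j) s)" for k
  have e: "vlim (\<lambda>J. \<Sum>j<J. t k j) (e k)" for k
    unfolding e_def using series_conv[OF small] by (rule someI_ex)
  have ebound: "v (e k) * r ^ k \<le> Mr r c" for k
  proof -
    have rk: "r ^ k > 0" using r by simp
    have "v (e k - (\<Sum>j<0. t k j)) \<le> Mr r c / r ^ k"
    proof (rule tail_bound[OF e])
      show "0 \<le> Mr r c / r ^ k" using M_nonneg[OF c] r by simp
      fix j :: nat
      have "v (t k j) * r ^ k \<le> Mr r c"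
      proof -
        have "v (t k j) = v (c (j + k)) * v (of_nat ((j + k) choose k) :: 'a) * v \<beta> ^ j"
          unfolding t_def by (simp add: v_mult v_power)
        also have "\<dots> \<le> v (c (j + k)) * 1 * r ^ j"
          using v_of_nat beta by (intro mult_mono power_mono) auto
        finally have "v (t k j) * r ^ k \<le> v (c (j + k)) * r ^ j * r ^ k" using r by (intro mult_right_mono) auto
        also have "\<dots> = v (c (j + k)) * r ^ (j + k)" by (simp add: power_add mult_ac)
        also have "\<dots> \<le> Mr r c" using M_upper[OF c] r by simp
        finally show ?thesis .
      qed
      thus "v (t k j) \<le> Mr r c / r ^ k" using rk by (simp add: pos_le_divide_eq)
    qed
    thus ?thesis using rk by (simp add: pos_le_divide_eq)
  qed
  have ent: "entire_fun v e (\<lambda>z. F (z + \<beta>))"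
    unfolding entire_fun_def series_sums_iff
  proof
    fix z
    define w where "w = z + \<beta>"
    define R where "R = max 1 (max (v z) (v \<beta>))"
    have R: "1 \<le> R" "v z \<le> R" "v \<beta> \<le> R" unfolding R_def by auto
    define u where "u n k = c n * of_nat (n choose k) * \<beta> ^ (n - k) * z ^ k" for n k
    have binom: "c n * w ^ n = (\<Sum>k\<le>n. u n k)" for n
      unfolding w_def u_def binomial_ring by (simp add: sum_distrib_left mult_ac)
    have vu: "v (u n k) \<le> v (c n) * R ^ n" if "k \<le> n" for n k
    proof -
      have "v (u n k) = v (c n) * v (of_nat (n choose k) :: 'a) * (v \<beta> ^ (n - k) * v z ^ k)"
        unfolding u_def by (simp add: v_mult v_power mult_ac)
      also have "\<dots> \<le> v (c n) * 1 * (R ^ (n - k) * R ^ k)"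
        using v_of_nat R by (intro mult_mono power_mono) auto
      also have "R ^ (n - k) * R ^ k = R ^ n" using that by (simp add: power_add[symmetric])
      finally show ?thesis by simp
    qed
    have ez: "vlim (\<lambda>J. \<Sum>j<J. u (j + k) k) (e k * z ^ k)" for k
    proof -
      have "vlim (\<lambda>J. z ^ k * (\<Sum>j<J. t k j)) (z ^ k * e k)" by (rule vlim_cmult[OF e])
      moreover have "z ^ k * (\<Sum>j<J. t k j) = (\<Sum>j<J. u (j + k) k)" for J
        unfolding sum_distrib_left t_def u_def by (simp add: mult_ac)
      ultimately show ?thesis by (simp add: mult.commute)
    qed
    have lim: "vlim (\<lambda>N. \<Sum>n<N. c n * w ^ n) (F w)" using c unfolding entire_fun_def series_sums_iff by blast
    show "vlim (\<lambda>K. \<Sum>k<K. e k * z ^ k) (F (z + \<beta>))"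
      unfolding vlim_def
    proof (intro allI impI)
      fix eps :: real assume eps: "eps > 0"
      have eps2: "eps / 2 > 0" using eps by simp
      have sm: "\<forall>e>0. \<exists>N. \<forall>n\<ge>N. v (c n) * R ^ n < e" using entire_small[OF c, of R] R by simp
      obtain K0 where K0: "\<forall>n\<ge>K0. v (c n) * R ^ n < eps / 2"
        using sm eps2 by blast
      have main: "v ((\<Sum>k<K. e k * z ^ k) - F w) \<le> eps / 2" if K: "K \<ge> K0" for K
      proof -
        have "v (F w - (\<Sum>k<K. e k * z ^ k)) \<le> eps / 2"
        proof (rule vlim_bound[OF lim, of K])
          fix N assume N: "K \<le> N"
          define y where "y = (\<Sum>k<K. e k * z ^ k)"
          define \<delta> where "\<delta> k = e k * z ^ k - (\<Sum>j<N - k. u (j + k) k)" for k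
          have vd: "v (\<delta> k) \<le> eps / 2" if "k < K" for k
          proof -
            have "v (e k * z ^ k - (\<Sum>j<N - k. u (j + k) k)) \<le> eps / 2"
            proof (rule tail_bound[OF ez])
              fix j assume "N - k \<le> j"
              hence jk: "j + k \<ge> K0" using that N K by auto
              show "v (u (j + k) k) \<le> eps / 2" using vu[of k "j + k"] K0 jk by fastforce
            qed (use eps in auto)
            thus ?thesis unfolding \<delta>_def .
          qed
          have shift: "(\<Sum>j<N - k. u (j + k) k) = (\<Sum>n\<in>{n. n \<in> {..<N} \<and> k \<le> n}. u n k)" if "k < K" for k
          proof -
            have "(\<Sum>j<N - k. u (j + k) k) = (\<Sum>n\<in>{0 + k..<(N - k) + k}. u n k)"
              by (subst sum.atLeastLessThan_shift_bounds) (simp add: lessThan_atLeast0 add.commute comp_def)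
            also have "{0 + k..<(N - k) + k} = {n. n \<in> {..<N} \<and> k \<le> n}" using that N by auto
            finally show ?thesis .
          qed
          have y: "y = (\<Sum>k<K. \<Sum>n\<in>{n. n \<in> {..<N} \<and> k \<le> n}. u n k) + (\<Sum>k<K. \<delta> k)"
            unfolding y_def sum.distrib[symmetric] by (rule sum.cong[OF refl]) (simp add: \<delta>_def shift)
          have swap: "(\<Sum>k<K. \<Sum>n\<in>{n. n \<in> {..<N} \<and> k \<le> n}. u n k)
              = (\<Sum>n<N. \<Sum>k\<in>{k. k \<in> {..<K} \<and> k \<le> n}. u n k)"
            by (rule sum.swap_restrict) auto
          have X: "(\<Sum>n<N. c n * w ^ n) = (\<Sum>n<N. \<Sum>k\<le>n. u n k)" by (simp add: binom)
          have dif: "(\<Sum>k\<le>n. u n k) - (\<Sum>k\<in>{k. k \<in> {..<K} \<and> k \<le> n}. u n k)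
               = (\<Sum>k\<in>{..n} - {k. k \<in> {..<K} \<and> k \<le> n}. u n k)" for n
            by (rule sum_diff[symmetric]) auto
          have eqd: "(\<Sum>n<N. c n * w ^ n) - y
              = (\<Sum>n<N. \<Sum>k\<in>{..n} - {k. k \<in> {..<K} \<and> k \<le> n}. u n k) - (\<Sum>k<K. \<delta> k)"
          proof -
            have "(\<Sum>n<N. c n * w ^ n) - y = (\<Sum>n<N. \<Sum>k\<le>n. u n k)
                 - ((\<Sum>n<N. \<Sum>k\<in>{k. k \<in> {..<K} \<and> k \<le> n}. u n k) + (\<Sum>k<K. \<delta> k))"
              apply (subst X)
              apply (subst y)
              apply (subst swap)
              apply (rule refl)
              done
            also have "\<dots> = (\<Sum>n<N. (\<Sum>k\<le>n. u n k) - (\<Sum>k\<in>{k. k \<in> {..<K} \<and> k \<le> n}. u n k)) - (\<Sum>k<K. \<delta> k)"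
              by (subst sum_subtractf) (rule diff_diff_add[symmetric])
            also have "\<dots> = (\<Sum>n<N. \<Sum>k\<in>{..n} - {k. k \<in> {..<K} \<and> k \<le> n}. u n k) - (\<Sum>k<K. \<delta> k)"
              by (rule arg_cong[where f="\<lambda>x. x - sum \<delta> {..<K}"], rule sum.cong[OF refl], rule dif)
            finally show ?thesis .
          qed
          have bA: "v (\<Sum>n<N. \<Sum>k\<in>{..n} - {k. k \<in> {..<K} \<and> k \<le> n}. u n k) \<le> eps / 2"
          proof (rule v_sum_le)
            fix n assume "n \<in> {..<N}"
            show "v (\<Sum>k\<in>{..n} - {k. k \<in> {..<K} \<and> k \<le> n}. u n k) \<le> eps / 2"
            proof (rule v_sum_le)
              fix k assume k: "k \<in> {..n} - {k. k \<in> {..<K} \<and> k \<le> n}"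
              hence "k \<le> n" "K \<le> k" by auto
              hence "n \<ge> K0" using K by simp
              thus "v (u n k) \<le> eps / 2" using vu[OF \<open>k \<le> n\<close>] K0 by fastforce
            qed (use eps in auto)
          qed (use eps in auto)
          have bB: "v (\<Sum>k<K. \<delta> k) \<le> eps / 2" using vd eps by (intro v_sum_le) auto
          have "v ((\<Sum>n<N. c n * w ^ n) - y) \<le> eps / 2"
            unfolding eqd using v_diff[of "\<Sum>n<N. \<Sum>k\<in>{..n} - {k. k \<in> {..<K} \<and> k \<le> n}. u n k" "\<Sum>k<K. \<delta> k"] bA bB
            by linarith
          thus "v ((\<Sum>n<N. c n * w ^ n) - (\<Sum>k<K. e k * z ^ k)) \<le> eps / 2"
            unfolding y_def .
        qed
        thus ?thesis using v_commute by metis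
      qed
      show "\<exists>N. \<forall>n\<ge>N. v ((\<Sum>k<n. e k * z ^ k) - F (z + \<beta>)) < eps"
      proof (intro exI[of _ K0] allI impI)
        fix n assume "K0 \<le> n"
        thus "v ((\<Sum>k<n. e k * z ^ k) - F (z + \<beta>)) < eps" using main[of n] eps unfolding w_def by linarith
      qed
    qed
  qed
  show ?thesis using ent ebound by blast
qed

lemma entire_comp_le:
  assumes c: "entire_fun v c F" and r: "0 < r" and a: "v \<alpha> = 1" and beta: "v \<beta> \<le> r"
  shows "\<exists>e. entire_fun v e (\<lambda>z. F (\<alpha> * z + \<beta>)) \<and> Mr r e \<le> Mr r c"
proof -
  obtain e1 where e1: "entire_fun v e1 (\<lambda>z. F (z + \<beta>))" "\<forall>k. v (e1 k) * r ^ k \<le> Mr r c"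
    using entire_trans[OF c r beta] by blast
  have "entire_fun v (\<lambda>n. e1 n * \<alpha> ^ n) (\<lambda>z. F (\<alpha> * z + \<beta>))"
    using entire_scale[OF e1(1), of \<alpha>] by simp
  moreover have "Mr r (\<lambda>n. e1 n * \<alpha> ^ n) \<le> Mr r c"
    using e1(2) a by (intro M_least) (simp add: v_mult v_power)
  ultimately show ?thesis by blast
qed

lemma entire_comp:
  assumes c: "entire_fun v c F" and r: "0 < r" and a: "v \<alpha> = 1" and beta: "v \<beta> \<le> r"
  shows "\<exists>e. entire_fun v e (\<lambda>z. F (\<alpha> * z + \<beta>)) \<and> Mr r e = Mr r c"
proof -
  obtain e where e: "entire_fun v e (\<lambda>z. F (\<alpha> * z + \<beta>))" "Mr r e \<le> Mr r c"
    using entire_comp_le[OF assms] by blast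
  have a0: "\<alpha> \<noteq> 0" using a by auto
  have a': "v (inverse \<alpha>) = 1" using a by (simp add: v_inverse)
  have b': "v (- \<beta> / \<alpha>) \<le> r" using a beta by (simp add: v_divide)
  obtain e' where e': "entire_fun v e' (\<lambda>w. (\<lambda>z. F (\<alpha> * z + \<beta>)) (inverse \<alpha> * w + - \<beta> / \<alpha>))"
    "Mr r e' \<le> Mr r e"
    using entire_comp_le[OF e(1) r a' b'] by blast
  have "(\<lambda>w. (\<lambda>z. F (\<alpha> * z + \<beta>)) (inverse \<alpha> * w + - \<beta> / \<alpha>)) = F"
    using a0 by (simp add: field_simps)
  hence "e' = c" using e'(1) coeff_unique c by metis
  thus ?thesis using e e' by auto
qed



lemma M_pos_fun: assumes "entire_fun v c H" "0 < Mr r c" shows "\<exists>z. H z \<noteq> 0"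
proof -
  have "\<exists>n. c n \<noteq> 0"
  proof (rule ccontr)
    assume "\<not> ?thesis" hence "c = (\<lambda>n. 0)" by auto
    thus False using assms(2) Mr_zero by simp
  qed
  thus ?thesis using coeff_nonzero_fun[OF assms(1)] by blast
qed

lemma M_pos_of_fun: assumes "entire_fun v c H" "H z \<noteq> 0" "0 < r" shows "0 < Mr r c"
  using fun_nonzero_coeff[OF assms(1,2)] M_pos[OF assms(1,3)] by blast

lemma mu_rep:
  assumes r: "0 < r" and cG: "entire_fun v cG G" and cH: "entire_fun v cH H"
    and Hz: "H z0 \<noteq> 0" and rep: "\<And>z. H z \<noteq> 0 \<Longrightarrow> \<phi> z = G z / H z"
  shows "mu v r \<phi> = Mr r cG / Mr r cH"
proof -
  have mr: "mero_rep v \<phi> G H"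
    unfolding mero_rep_def is_entire_def using cG cH Hz rep by blast
  define gh where "gh = (SOME gh. mero_rep v \<phi> (fst gh) (snd gh))"
  have m2: "mero_rep v \<phi> (fst gh) (snd gh)"
    unfolding gh_def by (rule someI[of _ "(G, H)"]) (simp add: mr)
  define G' where "G' = fst gh"
  define H' where "H' = snd gh"
  obtain cG' cH' z1 where cG': "entire_fun v cG' G'" and cH': "entire_fun v cH' H'" and H'z: "H' z1 \<noteq> 0"
    and rep': "\<And>z. H' z \<noteq> 0 \<Longrightarrow> \<phi> z = G' z / H' z"
    using m2 unfolding mero_rep_def is_entire_def G'_def H'_def by blast
  have mu: "mu v r \<phi> = Mr r cG' / Mr r cH'"
    unfolding mu_def Let_def gh_def[symmetric] G'_def[symmetric] H'_def[symmetric]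
    using mu_ent_eq[OF cG'] mu_ent_eq[OF cH'] by simp
  define cD where "cD n = cprod cG cH' n - cprod cG' cH n" for n
  have D: "entire_fun v cD (\<lambda>z. G z * H' z - G' z * H z)"
    unfolding cD_def by (rule entire_diff[OF entire_mult[OF cG cH'] entire_mult[OF cG' cH]])
  have Q: "entire_fun v (cprod (cprod cD cH) cH') (\<lambda>z. (G z * H' z - G' z * H z) * H z * H' z)"
    by (rule entire_mult[OF entire_mult[OF D cH] cH'])
  have "(\<lambda>z. (G z * H' z - G' z * H z) * H z * H' z) = (\<lambda>z. 0)"
  proof
    fix z
    show "(G z * H' z - G' z * H z) * H z * H' z = 0"
    proof (cases "H z \<noteq> 0 \<and> H' z \<noteq> 0")
      case True
      hence "G z / H z = G' z / H' z" using rep rep' by metis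
      hence "G z * H' z = G' z * H z" using True by (simp add: divide_eq_eq field_simps)
      thus ?thesis by simp
    qed auto
  qed
  hence "entire_fun v (cprod (cprod cD cH) cH') (\<lambda>z. 0)" using Q by simp
  hence "cprod (cprod cD cH) cH' = (\<lambda>n. 0)" using coeff_zero by blast
  hence "Mr r (cprod (cprod cD cH) cH') = 0" by (simp add: Mr_zero)
  hence z: "Mr r cD * Mr r cH * Mr r cH' = 0"
    using M_mult[OF entire_mult[OF D cH] cH' r] M_mult[OF D cH r] by simp
  have pH: "0 < Mr r cH" by (rule M_pos_of_fun[OF cH Hz r])
  have pH': "0 < Mr r cH'" by (rule M_pos_of_fun[OF cH' H'z r])
  have "Mr r cD = 0" using z pH pH' by simp
  hence "cD n = 0" for n using M_zero[OF D r] by blast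
  hence "cprod cG cH' = cprod cG' cH" unfolding cD_def by auto
  hence "Mr r (cprod cG cH') = Mr r (cprod cG' cH)" by simp
  hence "Mr r cG * Mr r cH' = Mr r cG' * Mr r cH" using M_mult[OF cG cH' r] M_mult[OF cG' cH r] by simp
  thus ?thesis unfolding mu using pH pH' by (simp add: field_simps)
qed

lemma quot_rep:
  assumes r: "0 < r" and cg: "entire_fun v cg g" and ch: "entire_fun v ch h"
    and gz: "g z1 \<noteq> 0" and hz: "h z0 \<noteq> 0" and rep: "\<And>z. h z \<noteq> 0 \<Longrightarrow> f z = g z / h z"
    and a: "v \<alpha> = 1" and b: "v \<beta> \<le> r"
  shows "\<exists>cG cH G H. entire_fun v cG G \<and> entire_fun v cH H
     \<and> (\<forall>z. H z \<noteq> 0 \<longrightarrow> f (\<alpha> * z + \<beta>) / f z = G z / H z)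
     \<and> Mr r cG = Mr r cH \<and> 0 < Mr r cH"
proof -
  obtain eg where eg: "entire_fun v eg (\<lambda>z. g (\<alpha> * z + \<beta>))" "Mr r eg = Mr r cg"
    using entire_comp[OF cg r a b] by blast
  obtain eh where eh: "entire_fun v eh (\<lambda>z. h (\<alpha> * z + \<beta>))" "Mr r eh = Mr r ch"
    using entire_comp[OF ch r a b] by blast
  have G: "entire_fun v (cprod (cprod eg ch) ch) (\<lambda>z. g (\<alpha> * z + \<beta>) * h z * h z)"
    by (rule entire_mult[OF entire_mult[OF eg(1) ch] ch])
  have H: "entire_fun v (cprod (cprod eh cg) ch) (\<lambda>z. h (\<alpha> * z + \<beta>) * g z * h z)"
    by (rule entire_mult[OF entire_mult[OF eh(1) cg] ch])
  have pg: "0 < Mr r cg" by (rule M_pos_of_fun[OF cg gz r])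
  have ph: "0 < Mr r ch" by (rule M_pos_of_fun[OF ch hz r])
  have MG: "Mr r (cprod (cprod eg ch) ch) = Mr r cg * Mr r ch * Mr r ch"
    using M_mult[OF entire_mult[OF eg(1) ch] ch r] M_mult[OF eg(1) ch r] eg(2) by simp
  have MH: "Mr r (cprod (cprod eh cg) ch) = Mr r ch * Mr r cg * Mr r ch"
    using M_mult[OF entire_mult[OF eh(1) cg] ch r] M_mult[OF eh(1) cg r] eh(2) by simp
  have pw: "f (\<alpha> * z + \<beta>) / f z = (g (\<alpha> * z + \<beta>) * h z * h z) / (h (\<alpha> * z + \<beta>) * g z * h z)"
    if "h (\<alpha> * z + \<beta>) * g z * h z \<noteq> 0" for z
  proof -
    have nz: "h (\<alpha> * z + \<beta>) \<noteq> 0" "g z \<noteq> 0" "h z \<noteq> 0" using that by auto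
    have fL: "f (\<alpha> * z + \<beta>) = g (\<alpha> * z + \<beta>) / h (\<alpha> * z + \<beta>)" using rep nz(1) by blast
    have fz: "f z = g z / h z" using rep nz(3) by blast
    show ?thesis unfolding fL fz using nz by (simp add: field_simps)
  qed
  show ?thesis
    apply (rule exI[of _ "cprod (cprod eg ch) ch"], rule exI[of _ "cprod (cprod eh cg) ch"])
    apply (rule exI[of _ "\<lambda>z. g (\<alpha> * z + \<beta>) * h z * h z"], rule exI[of _ "\<lambda>z. h (\<alpha> * z + \<beta>) * g z * h z"])
    using G H pw MG MH pg ph by (auto simp: mult_ac)
qed

definition phi :: "('a \<Rightarrow> 'a) \<Rightarrow> ('a \<times> 'a \<times> 'a) list \<Rightarrow> 'a \<Rightarrow> 'a" where
  "phi f xs z = sum_list (map (\<lambda>(w, \<alpha>, \<beta>). w * f (\<alpha> * z + \<beta>)) xs)"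

definition valid :: "real \<Rightarrow> ('a \<times> 'a \<times> 'a) list \<Rightarrow> bool" where
  "valid r xs \<longleftrightarrow> (\<forall>(w, \<alpha>, \<beta>) \<in> set xs. v w \<le> 1 \<and> v \<alpha> = 1 \<and> v \<beta> \<le> r)"

lemma phi_Nil[simp]: "phi f [] z = 0" unfolding phi_def by simp
lemma phi_Cons[simp]: "phi f ((w, \<alpha>, \<beta>) # xs) z = w * f (\<alpha> * z + \<beta>) + phi f xs z"
  unfolding phi_def by simp

lemma diff_phi:
  "diffL a b (phi f xs) z
     = phi f (map (\<lambda>(w, \<alpha>, \<beta>). (w, \<alpha> * a, \<alpha> * b + \<beta>)) xs @ map (\<lambda>(w, \<alpha>, \<beta>). (- w, \<alpha>, \<beta>)) xs) z"
proof (induction xs)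
  case Nil thus ?case by (simp add: diffL_def phi_def)
next
  case (Cons x xs)
  obtain w \<alpha> \<beta> where x: "x = (w, \<alpha>, \<beta>)" by (cases x)
  have "diffL a b (phi f (x # xs)) z = w * f (\<alpha> * (a * z + b) + \<beta>) - w * f (\<alpha> * z + \<beta>) + diffL a b (phi f xs) z"
    unfolding x diffL_def by simp
  also have "\<dots> = w * f (\<alpha> * a * z + (\<alpha> * b + \<beta>)) - w * f (\<alpha> * z + \<beta>) + diffL a b (phi f xs) z"
    by (simp add: algebra_simps)
  finally show ?case unfolding Cons x phi_def by (simp add: algebra_simps)
qed

lemma valid_diff:
  assumes "valid r xs" "v a = 1" "v b \<le> r"
  shows "valid r (map (\<lambda>(w, \<alpha>, \<beta>). (w, \<alpha> * a, \<alpha> * b + \<beta>)) xs @ map (\<lambda>(w, \<alpha>, \<beta>). (- w, \<alpha>, \<beta>)) xs)"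
proof -
  have "v (\<alpha> * b + \<beta>) \<le> r" if "v \<alpha> = 1" "v \<beta> \<le> r" for \<alpha> \<beta>
    using v_add[of "\<alpha> * b" \<beta>] that assms(3) by (simp add: v_mult)
  thus ?thesis using assms unfolding valid_def by (auto simp: v_mult)
qed

lemma iter_phi:
  assumes "v a = 1" "v b \<le> r" "0 \<le> r"
  shows "\<exists>xs. valid r xs \<and> (diffL a b ^^ m) f = phi f xs"
proof (induction m)
  case 0
  have "f = phi f [(1, 1, 0)]" by (simp add: fun_eq_iff)
  moreover have "valid r [(1, 1, 0)]" unfolding valid_def using assms by simp
  ultimately show ?case by auto
next
  case (Suc m)
  then obtain xs where xs: "valid r xs" "(diffL a b ^^ m) f = phi f xs" by blast
  have "(diffL a b ^^ Suc m) f = diffL a b (phi f xs)" using xs by simp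
  also have "\<dots> = phi f (map (\<lambda>(w, \<alpha>, \<beta>). (w, \<alpha> * a, \<alpha> * b + \<beta>)) xs @ map (\<lambda>(w, \<alpha>, \<beta>). (- w, \<alpha>, \<beta>)) xs)"
    using diff_phi by (simp add: fun_eq_iff)
  finally show ?case using valid_diff[OF xs(1) assms(1,2)] by blast
qed

lemma phi_rep:
  assumes r: "0 < r" and cg: "entire_fun v cg g" and ch: "entire_fun v ch h"
    and gz: "g z1 \<noteq> 0" and hz: "h z0 \<noteq> 0" and rep: "\<And>z. h z \<noteq> 0 \<Longrightarrow> f z = g z / h z"
  shows "valid r xs \<Longrightarrow> \<exists>cG cH G H. entire_fun v cG G \<and> entire_fun v cH H
     \<and> (\<forall>z. H z \<noteq> 0 \<longrightarrow> phi f xs z / f z = G z / H z)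
     \<and> Mr r cG \<le> Mr r cH \<and> 0 < Mr r cH"
proof (induction xs)
  case Nil
  have p: "0 < Mr r ch" by (rule M_pos_of_fun[OF ch hz r])
  show ?case
    apply (rule exI[of _ "\<lambda>n. 0"], rule exI[of _ ch], rule exI[of _ "\<lambda>z. 0"], rule exI[of _ h])
    using p by (simp add: entire_zero ch Mr_zero)
next
  case (Cons x xs)
  obtain w \<alpha> \<beta> where x: "x = (w, \<alpha>, \<beta>)" by (cases x)
  have vx: "v w \<le> 1" "v \<alpha> = 1" "v \<beta> \<le> r" using Cons.prems unfolding x valid_def by auto
  have vxs: "valid r xs" using Cons.prems unfolding valid_def by auto
  obtain cG2 cH2 G2 H2 where 2: "entire_fun v cG2 G2" "entire_fun v cH2 H2"
    "\<forall>z. H2 z \<noteq> 0 \<longrightarrow> phi f xs z / f z = G2 z / H2 z" "Mr r cG2 \<le> Mr r cH2" "0 < Mr r cH2"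
    using Cons.IH[OF vxs] by blast
  obtain cG1 cH1 G1 H1 where 1: "entire_fun v cG1 G1" "entire_fun v cH1 H1"
    "\<forall>z. H1 z \<noteq> 0 \<longrightarrow> f (\<alpha> * z + \<beta>) / f z = G1 z / H1 z" "Mr r cG1 = Mr r cH1" "0 < Mr r cH1"
    using quot_rep[OF r cg ch gz hz rep vx(2,3)] by blast
  have G1': "entire_fun v (\<lambda>n. w * cG1 n) (\<lambda>z. w * G1 z)" by (rule entire_cmult[OF 1(1)])
  have MG1': "Mr r (\<lambda>n. w * cG1 n) \<le> Mr r cH1"
  proof -
    have "Mr r (\<lambda>n. w * cG1 n) \<le> v w * Mr r cG1" using M_cmult_le[OF 1(1)] r by simp
    also have "\<dots> \<le> 1 * Mr r cG1" using vx(1) M_nonneg[OF 1(1)] r by (intro mult_right_mono) auto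
    finally show ?thesis using 1(4) by simp
  qed
  have A: "entire_fun v (cprod (\<lambda>n. w * cG1 n) cH2) (\<lambda>z. w * G1 z * H2 z)"
    by (rule entire_mult[OF G1' 2(2)])
  have B: "entire_fun v (cprod cG2 cH1) (\<lambda>z. G2 z * H1 z)" by (rule entire_mult[OF 2(1) 1(2)])
  have G: "entire_fun v (\<lambda>n. cprod (\<lambda>n. w * cG1 n) cH2 n + cprod cG2 cH1 n) (\<lambda>z. w * G1 z * H2 z + G2 z * H1 z)"
    by (rule entire_add[OF A B])
  have H: "entire_fun v (cprod cH1 cH2) (\<lambda>z. H1 z * H2 z)" by (rule entire_mult[OF 1(2) 2(2)])
  have MH: "Mr r (cprod cH1 cH2) = Mr r cH1 * Mr r cH2" by (rule M_mult[OF 1(2) 2(2) r])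
  have MG: "Mr r (\<lambda>n. cprod (\<lambda>n. w * cG1 n) cH2 n + cprod cG2 cH1 n) \<le> Mr r cH1 * Mr r cH2"
  proof -
    have "Mr r (\<lambda>n. cprod (\<lambda>n. w * cG1 n) cH2 n + cprod cG2 cH1 n)
        \<le> max (Mr r (cprod (\<lambda>n. w * cG1 n) cH2)) (Mr r (cprod cG2 cH1))"
      using M_add_le[OF A B] r by simp
    also have "Mr r (cprod (\<lambda>n. w * cG1 n) cH2) = Mr r (\<lambda>n. w * cG1 n) * Mr r cH2"
      by (rule M_mult[OF G1' 2(2) r])
    also have "Mr r (cprod cG2 cH1) = Mr r cG2 * Mr r cH1" by (rule M_mult[OF 2(1) 1(2) r])
    also have "max (Mr r (\<lambda>n. w * cG1 n) * Mr r cH2) (Mr r cG2 * Mr r cH1) \<le> Mr r cH1 * Mr r cH2"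
    proof -
      have "Mr r (\<lambda>n. w * cG1 n) * Mr r cH2 \<le> Mr r cH1 * Mr r cH2"
        using MG1' 2(5) by (intro mult_right_mono) auto
      moreover have "Mr r cG2 * Mr r cH1 \<le> Mr r cH2 * Mr r cH1"
        using 2(4) 1(5) by (intro mult_right_mono) auto
      ultimately show ?thesis by (simp add: mult.commute)
    qed
    finally show ?thesis .
  qed
  have pw: "phi f (x # xs) z / f z = (w * G1 z * H2 z + G2 z * H1 z) / (H1 z * H2 z)"
    if "H1 z * H2 z \<noteq> 0" for z
  proof -
    have nz: "H1 z \<noteq> 0" "H2 z \<noteq> 0" using that by auto
    have "phi f (x # xs) z / f z = w * (f (\<alpha> * z + \<beta>) / f z) + phi f xs z / f z"
      unfolding x by (simp add: add_divide_distrib)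
    also have "\<dots> = w * (G1 z / H1 z) + G2 z / H2 z" using 1(3) 2(3) nz by simp
    also have "\<dots> = (w * G1 z * H2 z + G2 z * H1 z) / (H1 z * H2 z)" using nz by (simp add: field_simps)
    finally show ?thesis .
  qed
  have p: "0 < Mr r cH1 * Mr r cH2" using 1(5) 2(5) by simp
  show ?case
    apply (rule exI[of _ "\<lambda>n. cprod (\<lambda>n. w * cG1 n) cH2 n + cprod cG2 cH1 n"], rule exI[of _ "cprod cH1 cH2"],
        rule exI[of _ "\<lambda>z. w * G1 z * H2 z + G2 z * H1 z"], rule exI[of _ "\<lambda>z. H1 z * H2 z"])
    using G H MH MG pw p by (simp del: phi_Cons)
qed


end

theorem lemma2p3:
  fixes v :: "'a::field_char_0 \<Rightarrow> real" and a b :: 'a and f :: "'a \<Rightarrow> 'a"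
    and m :: nat and r :: real
  assumes "nonarch_abs v" and "nontrivial_abs v" and "complete_abs v"
    and "alg_closed TYPE('a)"
    and "v a = 1"
    and "is_mero v f" and "mero_nonzero v f"
    and "0 < m"
    and "v b < r"
  shows "mu v r (\<lambda>z. f (a * z + b)) = mu v r f
       \<and> mu v r (\<lambda>z. f (a * z + b) / f z) = 1
       \<and> mu v r (\<lambda>z. ((diffL a b) ^^ m) f z / f z) \<le> 1"
proof -
  interpret ultra v using assms(1-3) by unfold_locales
  have r: "0 < r" using assms(9) v_nonneg[of b] by linarith
  have vb: "v b \<le> r" using assms(9) by simp
  have va: "v a = 1" by (rule assms(5))
  have a0: "a \<noteq> 0" using va by auto
  obtain g h where gh: "mero_rep v f g h" and "\<exists>z. g z \<noteq> 0"
    using assms(7) unfolding mero_nonzero_def by blast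
  then obtain z1 where gz: "g z1 \<noteq> 0" by blast
  obtain cg ch z0 where cg: "entire_fun v cg g" and ch: "entire_fun v ch h" and hz: "h z0 \<noteq> 0"
    and rep: "\<And>z. h z \<noteq> 0 \<Longrightarrow> f z = g z / h z"
    using gh unfolding mero_rep_def is_entire_def by blast
  have muf: "mu v r f = Mr r cg / Mr r ch" by (rule mu_rep[OF r cg ch hz rep])
  obtain eg where eg: "entire_fun v eg (\<lambda>z. g (a * z + b))" "Mr r eg = Mr r cg"
    using entire_comp[OF cg r va vb] by blast
  obtain eh where eh: "entire_fun v eh (\<lambda>z. h (a * z + b))" "Mr r eh = Mr r ch"
    using entire_comp[OF ch r va vb] by blast
  have hz': "(\<lambda>z. h (a * z + b)) ((z0 - b) / a) \<noteq> 0" using hz a0 by simp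
  have c1: "mu v r (\<lambda>z. f (a * z + b)) = mu v r f"
  proof -
    have "mu v r (\<lambda>z. f (a * z + b)) = Mr r eg / Mr r eh"
      by (rule mu_rep[OF r eg(1) eh(1) hz']) (use rep in simp)
    thus ?thesis using muf eg(2) eh(2) by simp
  qed
  have c2: "mu v r (\<lambda>z. f (a * z + b) / f z) = 1"
  proof -
    obtain cG cH G H where q: "entire_fun v cG G" "entire_fun v cH H"
      "\<forall>z. H z \<noteq> 0 \<longrightarrow> f (a * z + b) / f z = G z / H z" "Mr r cG = Mr r cH" "0 < Mr r cH"
      using quot_rep[OF r cg ch gz hz rep va vb] by blast
    obtain z2 where "H z2 \<noteq> 0" using M_pos_fun[OF q(2) q(5)] by blast
    hence "mu v r (\<lambda>z. f (a * z + b) / f z) = Mr r cG / Mr r cH"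
      using q by (intro mu_rep[OF r q(1) q(2)]) auto
    thus ?thesis using q(4,5) by simp
  qed
  have c3: "mu v r (\<lambda>z. ((diffL a b) ^^ m) f z / f z) \<le> 1"
  proof -
    obtain xs where xs: "valid r xs" "(diffL a b ^^ m) f = phi f xs"
      using iter_phi[OF va vb less_imp_le[OF r]] by blast
    obtain cG cH G H where q: "entire_fun v cG G" "entire_fun v cH H"
      "\<forall>z. H z \<noteq> 0 \<longrightarrow> phi f xs z / f z = G z / H z" "Mr r cG \<le> Mr r cH" "0 < Mr r cH"
      using phi_rep[OF r cg ch gz hz rep xs(1)] by blast
    obtain z2 where "H z2 \<noteq> 0" using M_pos_fun[OF q(2) q(5)] by blast
    hence "mu v r (\<lambda>z. phi f xs z / f z) = Mr r cG / Mr r cH"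
      using q by (intro mu_rep[OF r q(1) q(2)]) auto
    thus ?thesis unfolding xs(2) using q(4,5) by simp
  qed
  show ?thesis using c1 c2 c3 by blast
qed

end
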